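(* Let $f_i$ and $f_j$ be two finite set (random finite set) densities on the finite subsets of $\mathbb{R}^d$, with cardinality probability mass functions $p_i,p_j$ on $\{0,1,2,\ldots\}$ and localisation densities $\rho_{i,n},\rho_{j,n}$ ($n\ge 1$), and let $\omega\in[0,1]$. Let $z_\omega(n)$, $N_\omega$ and the fused cardinality pmf $p_\omega$ be as defined in the context. Fix a cardinality $n$. Then the inconsistency condition $$p_\omega(n)<\min\{p_i(n),p_j(n)\}$$ holds if $$z_\omega(n)<\frac{\sum_{n'\neq n} p_i^{(1-\omega)}(n')\,p_j^{\omega}(n')\,z_\omega(n')}{\dfrac{p_i^{(1-\omega)}(n)\,p_j^{\omega}(n)}{\min\{p_i(n),p_j(n)\}}-p_i^{(1-\omega)}(n)\,p_j^{\omega}(n)},$$ where the right-hand side is assumed to be well defined (i.e. $\min\{p_i(n),p_j(n)\}>0$ and the denominator is nonzero).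
   Context: A finite set density $f$ on finite subsets $X=\{x_1,\ldots,x_n\}\subset\mathbb{R}^d$ is written $f(X)=p(|X|)\,n!\,\rho_n(x_1,\ldots,x_n)$, where $p$ is a probability mass function on $\{0,1,2,\ldots\}$ (the cardinality distribution) and, for each $n\ge1$, $\rho_n$ is a probability density on $(\mathbb{R}^d)^n$ symmetric in its arguments (the localisation density). For $f_i=(p_i,\{\rho_{i,n}\})$, $f_j=(p_j,\{\rho_{j,n}\})$ and $\omega\in[0,1]$, define $z_\omega(0)=1$ and for $n\ge1$ $$z_\omega(n)=\int_{(\mathbb{R}^d)^n}\rho_{i,n}^{(1-\omega)}(x_1,\ldots,x_n)\,\rho_{j,n}^{\omega}(x_1,\ldots,x_n)\,\mathrm{d}x_1\cdots\mathrm{d}x_n,$$ $$N_\omega=\sum_{n'=0}^\infty p_i^{(1-\omega)}(n')\,p_j^{\omega}(n')\,z_\omega(n'),\qquad p_\omega(n)=\frac{1}{N_\omega}p_i^{(1-\omega)}(n)\,p_j^{\omega}(n)\,z_\omega(n).$$ $p_\omega$ is the cardinality distribution of the exponential mixture density (normalised weighted geometric mean) $f_\omega\propto f_i^{1-\omega}f_j^{\omega}$, normalised with respect to the set integral. *)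

theory Defs
  imports "HOL-Analysis.Analysis" "HOL-Combinatorics.Permutations"
begin

text \<open>Real power with the convention x^0 = 1 (also for x = 0), as in the paper.\<close>
definition pw :: "real \<Rightarrow> real \<Rightarrow> real" where
  "pw x a = (if a = 0 then 1 else x powr a)"

text \<open>(R^d)^n is modelled as functions {..<n} \<Rightarrow> 'a with Lebesgue (product) measure.\<close>
abbreviation tuple_measure :: "nat \<Rightarrow> (nat \<Rightarrow> 'a::euclidean_space) measure" where
  "tuple_measure n \<equiv> PiM {..<n} (\<lambda>_. lborel)"

definition loc_density :: "nat \<Rightarrow> ((nat \<Rightarrow> 'a::euclidean_space) \<Rightarrow> real) \<Rightarrow> bool" where
  "loc_density n r \<longleftrightarrow>
     r \<in> borel_measurable (tuple_measure n) \<and>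
     (\<forall>x \<in> space (tuple_measure n). 0 \<le> r x) \<and>
     integrable (tuple_measure n) r \<and>
     integral\<^sup>L (tuple_measure n) r = 1 \<and>
     (\<forall>\<sigma>. \<sigma> permutes {..<n} \<longrightarrow> (\<forall>x \<in> space (tuple_measure n). r (x \<circ> \<sigma>) = r x))"

text \<open>A finite set density given by cardinality pmf p and localisation densities \<rho> n (n \<ge> 1).\<close>
definition fisst_density :: "(nat \<Rightarrow> real) \<Rightarrow> (nat \<Rightarrow> (nat \<Rightarrow> 'a::euclidean_space) \<Rightarrow> real) \<Rightarrow> bool" where
  "fisst_density p \<rho> \<longleftrightarrow> (\<forall>n. 0 \<le> p n) \<and> p sums 1 \<and> (\<forall>n\<ge>1. loc_density n (\<rho> n))"

definition z_omega :: "real \<Rightarrow> (nat \<Rightarrow> (nat \<Rightarrow> 'a::euclidean_space) \<Rightarrow> real)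
    \<Rightarrow> (nat \<Rightarrow> (nat \<Rightarrow> 'a) \<Rightarrow> real) \<Rightarrow> nat \<Rightarrow> real" where
  "z_omega \<omega> \<rho>i \<rho>j n = (if n = 0 then 1 else
     integral\<^sup>L (tuple_measure n) (\<lambda>x. pw (\<rho>i n x) (1 - \<omega>) * pw (\<rho>j n x) \<omega>))"

definition N_omega :: "real \<Rightarrow> (nat \<Rightarrow> real) \<Rightarrow> (nat \<Rightarrow> (nat \<Rightarrow> 'a::euclidean_space) \<Rightarrow> real)
    \<Rightarrow> (nat \<Rightarrow> real) \<Rightarrow> (nat \<Rightarrow> (nat \<Rightarrow> 'a) \<Rightarrow> real) \<Rightarrow> real" where
  "N_omega \<omega> pI \<rho>i pJ \<rho>j = (\<Sum>n'. pw (pI n') (1 - \<omega>) * pw (pJ n') \<omega> * z_omega \<omega> \<rho>i \<rho>j n')"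

definition p_omega :: "real \<Rightarrow> (nat \<Rightarrow> real) \<Rightarrow> (nat \<Rightarrow> (nat \<Rightarrow> 'a::euclidean_space) \<Rightarrow> real)
    \<Rightarrow> (nat \<Rightarrow> real) \<Rightarrow> (nat \<Rightarrow> (nat \<Rightarrow> 'a) \<Rightarrow> real) \<Rightarrow> nat \<Rightarrow> real" where
  "p_omega \<omega> pI \<rho>i pJ \<rho>j n =
     pw (pI n) (1 - \<omega>) * pw (pJ n) \<omega> * z_omega \<omega> \<rho>i \<rho>j n / N_omega \<omega> pI \<rho>i pJ \<rho>j"

end

theory Submission
  imports Defs
begin

lemma pw_young:
  assumes "0 \<le> x" "0 \<le> y" "0 \<le> w" "w \<le> 1"
  shows "pw x (1 - w) * pw y w \<le> (1 - w) * x + w * y"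
proof -
  consider "w = 0" | "w = 1" | "0 < w" "w < 1" using assms by linarith
  then show ?thesis
  proof cases
    case 1 then show ?thesis using assms by (simp add: pw_def)
  next
    case 2 then show ?thesis using assms by (simp add: pw_def)
  next
    case 3
    show ?thesis
    proof (cases "x = 0 \<or> y = 0")
      case True then show ?thesis using 3 assms by (auto simp: pw_def)
    next
      case False
      then have "x powr (1 - w) * y powr w \<le> (1 - w) * x + w * y"
        using 3 assms by (intro Youngs_inequality_0) auto
      then show ?thesis using 3 by (simp add: pw_def)
    qed
  qed
qed

theorem proposition1:
  fixes pI pJ :: "nat \<Rightarrow> real"
    and \<rho>i \<rho>j :: "nat \<Rightarrow> (nat \<Rightarrow> 'a::euclidean_space) \<Rightarrow> real"
    and \<omega> :: real and n :: nat
  assumes fi: "fisst_density pI \<rho>i"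
    and fj: "fisst_density pJ \<rho>j"
    and \<omega>: "0 \<le> \<omega>" "\<omega> \<le> 1"
    and min_pos: "min (pI n) (pJ n) > 0"
    and denom_nz: "pw (pI n) (1 - \<omega>) * pw (pJ n) \<omega> / min (pI n) (pJ n)
                     - pw (pI n) (1 - \<omega>) * pw (pJ n) \<omega> \<noteq> 0"
    and cond: "z_omega \<omega> \<rho>i \<rho>j n <
       (\<Sum>n'. if n' = n then 0 else pw (pI n') (1 - \<omega>) * pw (pJ n') \<omega> * z_omega \<omega> \<rho>i \<rho>j n')
       / (pw (pI n) (1 - \<omega>) * pw (pJ n) \<omega> / min (pI n) (pJ n)
          - pw (pI n) (1 - \<omega>) * pw (pJ n) \<omega>)"
  shows "p_omega \<omega> pI \<rho>i pJ \<rho>j n < min (pI n) (pJ n)"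
proof -
  define g where "g = (\<lambda>n'. pw (pI n') (1 - \<omega>) * pw (pJ n') \<omega> * z_omega \<omega> \<rho>i \<rho>j n')"
  define f where "f = (\<lambda>n'. if n' = n then 0 else g n')"
  define a where "a = pw (pI n) (1 - \<omega>) * pw (pJ n) \<omega>"
  define m where "m = min (pI n) (pJ n)"
  define z where "z = z_omega \<omega> \<rho>i \<rho>j n"
  have pwnn: "\<And>x e. 0 \<le> x \<Longrightarrow> 0 \<le> pw x e" by (simp add: pw_def)
  have pwpos: "\<And>x e. 0 < x \<Longrightarrow> 0 < pw x e" by (simp add: pw_def)
  have pIn: "\<forall>k. 0 \<le> pI k" "pI sums 1" using fi by (auto simp: fisst_density_def)
  have pJn: "\<forall>k. 0 \<le> pJ k" "pJ sums 1" using fj by (auto simp: fisst_density_def)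
  have zi: "\<And>k. 0 \<le> z_omega \<omega> \<rho>i \<rho>j k"
  proof -
    fix k
    show "0 \<le> z_omega \<omega> \<rho>i \<rho>j k"
    proof (cases "k = 0")
      case True then show ?thesis by (simp add: z_omega_def)
    next
      case False
      have l1: "loc_density k (\<rho>i k)" using fi False by (auto simp: fisst_density_def)
      have l2: "loc_density k (\<rho>j k)" using fj False by (auto simp: fisst_density_def)
      have "AE x in tuple_measure k. 0 \<le> pw (\<rho>i k x) (1 - \<omega>) * pw (\<rho>j k x) \<omega>"
        using l1 l2 by (intro AE_I2) (auto simp: loc_density_def intro!: mult_nonneg_nonneg pwnn)
      then show ?thesis using False by (simp add: z_omega_def integral_nonneg_AE)
    qed
  qed
  have gnn: "\<And>k. 0 \<le> g k" unfolding g_def using pIn pJn zi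
    by (intro mult_nonneg_nonneg pwnn) auto
  have m0: "0 < m" using min_pos m_def by simp
  have m1: "m \<le> 1"
  proof -
    have "sum pI {n} \<le> suminf pI"
      using pIn by (intro sum_le_suminf) (auto simp: sums_summable)
    then have "pI n \<le> 1" using pIn sums_unique by fastforce
    then show ?thesis by (simp add: m_def)
  qed
  have apos: "0 < a" unfolding a_def using min_pos by (intro mult_pos_pos pwpos) auto
  have mne1: "m \<noteq> 1" using denom_nz a_def m_def by auto
  have D: "a / m - a = a * (1 - m) / m" using m0 by (simp add: field_simps)
  have Dpos: "0 < a * (1 - m) / m" using apos m0 m1 mne1 by simp
  have z0: "0 \<le> z" using zi z_def by simp
  have gn: "g n = a * z" by (simp add: g_def a_def z_def)
  have c: "z < suminf f / (a * (1 - m) / m)"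
    using cond unfolding f_def g_def a_def m_def z_def D[unfolded a_def m_def] .
  have Nd: "N_omega \<omega> pI \<rho>i pJ \<rho>j = suminf g" by (simp add: N_omega_def g_def)
  have pd: "p_omega \<omega> pI \<rho>i pJ \<rho>j n = a * z / suminf g"
    by (simp add: p_omega_def Nd a_def z_def)
  have zle: "\<And>k. z_omega \<omega> \<rho>i \<rho>j k \<le> 1"
  proof -
    fix k
    show "z_omega \<omega> \<rho>i \<rho>j k \<le> 1"
    proof (cases "k = 0")
      case True then show ?thesis by (simp add: z_omega_def)
    next
      case False
      have l1: "loc_density k (\<rho>i k)" using fi False by (auto simp: fisst_density_def)
      have l2: "loc_density k (\<rho>j k)" using fj False by (auto simp: fisst_density_def)
      let ?h = "\<lambda>x. pw (\<rho>i k x) (1 - \<omega>) * pw (\<rho>j k x) \<omega>"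
      have "integral\<^sup>L (tuple_measure k) ?h \<le> 1"
      proof (cases "integrable (tuple_measure k) ?h")
        case True
        have "integral\<^sup>L (tuple_measure k) ?h \<le>
              integral\<^sup>L (tuple_measure k) (\<lambda>x. (1 - \<omega>) * \<rho>i k x + \<omega> * \<rho>j k x)"
          using True l1 l2 \<omega> by (intro integral_mono pw_young) (auto simp: loc_density_def)
        also have "\<dots> = 1" using l1 l2 by (simp add: loc_density_def)
        finally show ?thesis .
      next
        case False then show ?thesis by (simp add: not_integrable_integral_eq)
      qed
      then show ?thesis using False by (simp add: z_omega_def)
    qed
  qed
  have gsum: "summable g"
  proof (rule summable_comparison_test)
    show "\<exists>N. \<forall>k\<ge>N. norm (g k) \<le> (1 - \<omega>) * pI k + \<omega> * pJ k"
    proof (intro exI allI impI)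
      fix k
      have P: "0 \<le> pw (pI k) (1 - \<omega>) * pw (pJ k) \<omega>" using pIn pJn
        by (intro mult_nonneg_nonneg pwnn) auto
      have "g k \<le> pw (pI k) (1 - \<omega>) * pw (pJ k) \<omega>"
        unfolding g_def using P zle[of k] by (simp add: mult_left_le)
      also have "\<dots> \<le> (1 - \<omega>) * pI k + \<omega> * pJ k"
        using pIn pJn \<omega> by (intro pw_young) auto
      finally show "norm (g k) \<le> (1 - \<omega>) * pI k + \<omega> * pJ k" using gnn[of k] by simp
    qed
    show "summable (\<lambda>k. (1 - \<omega>) * pI k + \<omega> * pJ k)"
      using pIn pJn by (intro summable_add summable_mult) (auto simp: sums_summable)
  qed
  have True: "summable f"
    by (rule summable_comparison_test[OF _ gsum]) (auto simp: f_def gnn)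
  show ?thesis
  proof -
    have "(\<lambda>k. f k + (if k = n then g n else 0)) sums (suminf f + g n)"
      using True sums_single[of n "\<lambda>_. g n"] by (intro sums_add) (auto simp: summable_sums)
    moreover have "(\<lambda>k. f k + (if k = n then g n else 0)) = g" by (auto simp: f_def)
    ultimately have Ng: "suminf g = suminf f + a * z" using gn sums_unique by fastforce
    have "z * (a * (1 - m) / m) < suminf f" using c Dpos pos_less_divide_eq[OF Dpos, of z "suminf f"] by linarith
    then have "a * z * (1 - m) < m * suminf f" using m0 by (simp add: field_simps)
    then have lt: "a * z < m * suminf g" using Ng by (simp add: algebra_simps)
    have "0 \<le> suminf f" using True gnn by (intro suminf_nonneg) (auto simp: f_def)
    then have "0 \<le> suminf g" using Ng apos z0 by simp
    show ?thesis
    proof (cases "suminf g = 0")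
      case True then show ?thesis using pd m0 m_def by simp
    next
      case False
      then have "0 < suminf g" using \<open>0 \<le> suminf g\<close> by simp
      then have "a * z / suminf g < m" using lt by (simp add: pos_divide_less_eq mult.commute)
      then show ?thesis using pd m_def by simp
    qed
  qed
qed

end
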